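(* Let $X$ be a smooth projective curve of genus $g\ge 1$ over $\mathbb{F}_q$. Then, as $n\to\infty$, $$\widehat v_n = O\big(q^{(g-1)n(n+1)/2}\big),$$ where the implied constant depends only on $X/\mathbb{F}_q$.
   Context: The Artin zeta function of $X$ is $Z_X(t)=\sum_{D\ge 0} t^{\deg D}$, the sum being over effective divisors, with $t=q^{-s}$. It is a rational function $Z_X(t)=\frac{P_X(t)}{(1-t)(1-qt)}$, where $P_X$ is a polynomial of degree $2g$ with $P_X(0)=1$. Put $\zeta_X(s)=Z_X(q^{-s})$ and $\widehat\zeta_X(s):=q^{(g-1)s}\zeta_X(s)$. Define $\widehat\zeta_X^*(1):=\lim_{s\to 1}(1-q^{1-s})\widehat\zeta_X(s)=\frac{q^{g-1}P_X(q^{-1})}{1-q^{-1}}$ and, for $n\ge 1$, $\widehat v_n:=\widehat\zeta_X^*(1)\,\widehat\zeta_X(2)\widehat\zeta_X(3)\cdots\widehat\zeta_X(n)$. *)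

theory Defs
  imports "HOL-Computational_Algebra.Polynomial" "HOL-Library.Landau_Symbols" Complex_Main
begin

text \<open>A curve X/F_q of genus g is represented through its zeta data: the prime power q,
  the genus g and the numerator polynomial P_X (integer coefficients, degree 2g, P_X(0)=1).\<close>

definition prime_power :: "nat \<Rightarrow> bool" where
  "prime_power q \<longleftrightarrow> (\<exists>p k. prime p \<and> k \<ge> 1 \<and> q = p ^ k)"

definition Z_fun :: "nat \<Rightarrow> int poly \<Rightarrow> real \<Rightarrow> real" where
  "Z_fun q P t = poly (map_poly real_of_int P) t / ((1 - t) * (1 - real q * t))"

definition zeta_fun :: "nat \<Rightarrow> int poly \<Rightarrow> real \<Rightarrow> real" where
  "zeta_fun q P s = Z_fun q P (real q powr (- s))"

definition zeta_hat :: "nat \<Rightarrow> nat \<Rightarrow> int poly \<Rightarrow> real \<Rightarrow> real" where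
  "zeta_hat q g P s = real q powr ((real g - 1) * s) * zeta_fun q P s"

text \<open>residue value: q^{g-1} P_X(1/q) / (1 - 1/q)\<close>
definition zeta_hat_star_1 :: "nat \<Rightarrow> nat \<Rightarrow> int poly \<Rightarrow> real" where
  "zeta_hat_star_1 q g P =
     real q powr (real g - 1) * poly (map_poly real_of_int P) (1 / real q) / (1 - 1 / real q)"

definition v_hat :: "nat \<Rightarrow> nat \<Rightarrow> int poly \<Rightarrow> nat \<Rightarrow> real" where
  "v_hat q g P n = zeta_hat_star_1 q g P * (\<Prod>k=2..n. zeta_hat q g P (real k))"

end

theory Submission
  imports Defs
begin

lemma poly_abs_bound:
  fixes Q :: "real poly" assumes "\<bar>x\<bar> \<le> 1"
  shows "\<bar>poly Q x\<bar> \<le> (\<Sum>i\<le>degree Q. \<bar>coeff Q i\<bar>)"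
proof -
  have "\<bar>poly Q x\<bar> \<le> (\<Sum>i\<le>degree Q. \<bar>coeff Q i * x ^ i\<bar>)"
    unfolding poly_altdef by (rule sum_abs)
  also have "\<dots> \<le> (\<Sum>i\<le>degree Q. \<bar>coeff Q i\<bar>)"
  proof (rule sum_mono)
    fix i
    have "\<bar>x\<bar> ^ i \<le> 1" using assms by (simp add: power_le_one)
    then show "\<bar>coeff Q i * x ^ i\<bar> \<le> \<bar>coeff Q i\<bar>"
      by (simp add: abs_mult power_abs mult_left_le)
  qed
  finally show ?thesis .
qed

lemma poly_one_bound:
  fixes p :: "real poly" assumes "coeff p 0 = 1"
  shows "\<exists>C\<ge>0. \<forall>x. 0 \<le> x \<and> x \<le> 1 \<longrightarrow> \<bar>poly p x\<bar> \<le> 1 + C * x"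
proof -
  obtain a Q where pq: "p = pCons a Q" by (cases p) auto
  with assms have a: "a = 1" by simp
  define C where "C = (\<Sum>i\<le>degree Q. \<bar>coeff Q i\<bar>)"
  have "C \<ge> 0" unfolding C_def by (simp add: sum_nonneg)
  moreover have "\<bar>poly p x\<bar> \<le> 1 + C * x" if "0 \<le> x" "x \<le> 1" for x
  proof -
    have "\<bar>poly p x\<bar> \<le> 1 + x * \<bar>poly Q x\<bar>"
      using that abs_triangle_ineq[of 1 "x * poly Q x"] by (simp add: pq a abs_mult)
    also have "\<dots> \<le> 1 + x * C"
      using poly_abs_bound[of x Q] that unfolding C_def
      by (simp add: mult_left_mono)
    finally show ?thesis by (simp add: mult.commute)
  qed
  ultimately show ?thesis by blast
qed

lemma inv_bound: fixes y :: real assumes "0 \<le> y" "y \<le> 1/2"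
  shows "1 / (1 - y) \<le> exp (2 * y)"
proof -
  have e: "(1 + 2*y) * (1 - y) = 1 + y * (1 - 2*y)" by (simp add: algebra_simps)
  have "y * (1 - 2*y) \<ge> 0" using assms by (intro mult_nonneg_nonneg) auto
  then have "(1 + 2*y) * (1 - y) \<ge> 1" unfolding e by simp
  then have "1 / (1 - y) \<le> 1 + 2 * y" using assms by (simp add: divide_simps)
  also have "\<dots> \<le> exp (2 * y)" by (rule exp_ge_add_one_self)
  finally show ?thesis .
qed

lemma factor_bound:
  fixes p :: "real poly" and q :: real and C :: real and k :: nat
  assumes q: "q \<ge> 2" and k: "k \<ge> 2" and C: "C \<ge> 0"
    and pb: "\<forall>x. 0 \<le> x \<and> x \<le> 1 \<longrightarrow> \<bar>poly p x\<bar> \<le> 1 + C * x"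
  shows "\<bar>poly p (1 / q ^ k) / ((1 - 1 / q ^ k) * (1 - q * (1 / q ^ k)))\<bar>
           \<le> exp ((C + 4) * (1 / q ^ (k - 1)))"
proof -
  define y where "y = 1 / q ^ (k - 1)"
  define x where "x = 1 / q ^ k"
  have qk: "q ^ k = q * q ^ (k - 1)" using k
    by (metis Suc_diff_1 le_trans one_le_numeral Suc_1 power_Suc not_less_eq_eq zero_less_Suc less_le_trans)
  have qpos: "q ^ (k - 1) \<ge> q" using q k by (simp add: power_increasing[of 1 "k-1" q, simplified])
  have y0: "0 \<le> y" using q by (simp add: y_def)
  have y1: "y \<le> 1/2" using q qpos unfolding y_def by (simp add: divide_simps)
  have xy: "q * x = y" using q unfolding x_def y_def qk by simp
  have x0: "0 \<le> x" using q by (simp add: x_def)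
  have xley: "x \<le> y" using xy mult_right_mono[of 2 q x] q x0 by linarith
  have a1: "\<bar>poly p x\<bar> \<le> exp (C * y)"
  proof -
    have "\<bar>poly p x\<bar> \<le> 1 + C * x" using pb x0 xley y1 by simp
    also have "\<dots> \<le> exp (C * x)" by (rule exp_ge_add_one_self)
    also have "\<dots> \<le> exp (C * y)" using C xley by (simp add: mult_left_mono)
    finally show ?thesis .
  qed
  have a2: "1 / (1 - x) \<le> exp (2 * y)"
    using inv_bound[of x] x0 xley y1 by (smt (verit) exp_le_cancel_iff)
  have a3: "1 / (1 - y) \<le> exp (2 * y)" using inv_bound[of y] y0 y1 by simp
  have "\<bar>poly p x / ((1 - x) * (1 - q * x))\<bar> = \<bar>poly p x\<bar> * (1 / (1 - x)) * (1 / (1 - y))"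
    using xy xley y1 by (simp add: abs_mult abs_divide)
  also have "\<dots> \<le> exp (C * y) * exp (2 * y) * exp (2 * y)"
    using a1 a2 a3 xley y1 by (intro mult_mono) auto
  also have "\<dots> = exp ((C + 4) * y)" by (simp add: mult_exp_exp algebra_simps)
  finally show ?thesis unfolding x_def y_def .
qed

lemma geo_bound:
  fixes r :: real assumes "0 \<le> r" "2 * r \<le> 1"
  shows "(\<Sum>k\<in>{2..Suc m}. r ^ (k - 1)) \<le> 1 - r ^ m"
proof (induction m)
  case 0 then show ?case by simp
next
  case (Suc m)
  have "(\<Sum>k\<in>{2..Suc (Suc m)}. r ^ (k - 1)) = r ^ Suc m + (\<Sum>k\<in>{2..Suc m}. r ^ (k - 1))"
    by (simp add: atLeastAtMostSuc_conv)
  also have "\<dots> \<le> r ^ Suc m + (1 - r ^ m)" using Suc by simp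
  also have "\<dots> \<le> 1 - r ^ Suc m"
  proof -
    have "2 * r ^ Suc m \<le> r ^ m" using assms mult_right_mono[of "2*r" 1 "r^m"] by (simp add: algebra_simps)
    then show ?thesis by simp
  qed
  finally show ?case .
qed

lemma geo_bound1:
  fixes r :: real assumes "0 \<le> r" "2 * r \<le> 1"
  shows "(\<Sum>k\<in>{2..n}. r ^ (k - 1)) \<le> 1"
proof (cases n)
  case 0 then show ?thesis by simp
next
  case (Suc m)
  then show ?thesis using geo_bound[OF assms, of m] assms by (smt (verit) zero_le_power)
qed

lemma sum_k_bound: "(\<Sum>k\<in>{2..n}. real k) \<le> real n * (real n + 1) / 2"
proof (induction n)
  case 0 then show ?case by simp
next
  case (Suc n)
  show ?case
  proof (cases "n = 0")
    case True then show ?thesis by simp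
  next
    case False
    then have "(\<Sum>k\<in>{2..Suc n}. real k) = real (Suc n) + (\<Sum>k\<in>{2..n}. real k)"
      by (simp add: atLeastAtMostSuc_conv)
    then show ?thesis using Suc by (simp add: algebra_simps)
  qed
qed

theorem mainTheorem1:
  fixes q g :: nat and P :: "int poly"
  assumes "prime_power q" and "g \<ge> 1"
    and "degree P = 2 * g" and "poly P 0 = 1"
  shows "(\<lambda>n. v_hat q g P n) \<in> O(\<lambda>n. real q powr ((real g - 1) * real n * (real n + 1) / 2))"
proof -
  obtain p e where pe: "prime p" "e \<ge> 1" "q = p ^ e" using assms(1) unfolding prime_power_def by blast
  have "p \<ge> 2" using pe(1) prime_ge_2_nat by blast
  then have "p ^ e \<ge> 2 ^ 1" using pe(2) by (meson le_trans power_increasing power_mono one_le_numeral zero_le_numeral)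
  then have "q \<ge> 2" using pe(3) by simp
  then have q2: "real q \<ge> 2" by simp
  define Pr where "Pr = map_poly real_of_int P"
  have c0: "coeff Pr 0 = 1" unfolding Pr_def using assms(4) by (simp add: coeff_map_poly poly_0_coeff_0)
  obtain C where C: "C \<ge> 0" "\<forall>x. 0 \<le> x \<and> x \<le> 1 \<longrightarrow> \<bar>poly Pr x\<bar> \<le> 1 + C * x"
    using poly_one_bound[OF c0] by blast
  define F where "F k = poly Pr (1 / real q ^ k) / ((1 - 1 / real q ^ k) * (1 - real q * (1 / real q ^ k)))" for k :: nat
  have zh: "zeta_hat q g P (real k) = real q powr ((real g - 1) * real k) * F k" for k :: nat
  proof -
    have "real q powr (- real k) = 1 / real q ^ k" using q2
      by (simp add: powr_minus powr_realpow divide_inverse)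
    then show ?thesis unfolding zeta_hat_def zeta_fun_def Z_fun_def F_def Pr_def by simp
  qed
  define S where "S = zeta_hat_star_1 q g P"
  define K where "K = \<bar>S\<bar> * exp (C + 4)"
  have bound: "\<bar>v_hat q g P n\<bar> \<le> K * real q powr ((real g - 1) * real n * (real n + 1) / 2)" for n
  proof -
    have "(\<Prod>k=2..n. zeta_hat q g P (real k)) = (\<Prod>k=2..n. real q powr ((real g - 1) * real k)) * (\<Prod>k=2..n. F k)"
      by (simp add: zh prod.distrib)
    also have "(\<Prod>k=2..n. real q powr ((real g - 1) * real k)) = real q powr ((real g - 1) * (\<Sum>k=2..n. real k))"
      using q2 by (simp add: powr_sum sum_distrib_left)
    finally have eq: "v_hat q g P n = S * real q powr ((real g - 1) * (\<Sum>k=2..n. real k)) * (\<Prod>k=2..n. F k)"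
      unfolding v_hat_def S_def by simp
    have pw: "real q powr ((real g - 1) * (\<Sum>k=2..n. real k)) \<le> real q powr ((real g - 1) * real n * (real n + 1) / 2)"
    proof -
      have "(real g - 1) * (\<Sum>k=2..n. real k) \<le> (real g - 1) * (real n * (real n + 1) / 2)"
        using assms(2) sum_k_bound[of n] by (intro mult_left_mono) auto
      then show ?thesis using q2 by (intro powr_mono) auto
    qed
    have pf: "\<bar>\<Prod>k=2..n. F k\<bar> \<le> exp (C + 4)"
    proof -
      have "\<bar>\<Prod>k=2..n. F k\<bar> = (\<Prod>k=2..n. \<bar>F k\<bar>)" by (simp add: abs_prod)
      also have "\<dots> \<le> (\<Prod>k=2..n. exp ((C + 4) * (1 / real q) ^ (k - 1)))"
        using factor_bound[OF q2 _ C(1) C(2)] unfolding F_def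
        by (intro prod_mono) (auto simp: power_one_over)
      also have "\<dots> = exp ((C + 4) * (\<Sum>k=2..n. (1 / real q) ^ (k - 1)))"
        by (simp add: exp_sum sum_distrib_left)
      also have "\<dots> \<le> exp (C + 4)"
        using geo_bound1[of "1 / real q" n] q2 C(1) mult_left_mono[of _ 1 "C+4"]
        by (simp add: divide_simps)
      finally show ?thesis .
    qed
    have "\<bar>v_hat q g P n\<bar> = \<bar>S\<bar> * real q powr ((real g - 1) * (\<Sum>k=2..n. real k)) * \<bar>\<Prod>k=2..n. F k\<bar>"
      unfolding eq by (simp add: abs_mult)
    also have "\<dots> \<le> \<bar>S\<bar> * real q powr ((real g - 1) * real n * (real n + 1) / 2) * exp (C + 4)"
      using pw pf by (intro mult_mono) auto
    finally show ?thesis unfolding K_def by (simp add: algebra_simps)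
  qed
  show ?thesis
    by (rule bigoI[of _ K]) (use bound in auto)
qed
end
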